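(* Let $h(z)=\sum_{k\ge1}h_kz^k$ be a power series with non-negative coefficients, not identically zero. Let $\mathbf{w}=(\omega_k)_{k\ge0}$ be the coefficients of $\phi(z)=1/(1-h(z))$ (as a formal power series), and let $p(z)=zh(z)=\sum_{k\ge2}p_kz^k$. Then $\mathbf{w}$ has type I, II or III (in the sense of weight sequences) if and only if $(p_k)_{k}$ has type I, II or III respectively (in the sense for $(p_k)$), and moreover $\tau=t_0$.
   Context: Types of a weight sequence $\mathbf{w}$ (with $\omega_0>0$ and $\omega_k>0$ for some $k\ge2$, which holds here): let $\rho_\phi$ be the radius of convergence of $\phi(z)=\sum_k\omega_kz^k$; if $\rho_\phi>0$ put $\psi(t)=t\phi'(t)/\phi(t)$ on $[0,\rho_\phi)$ and $\nu=\lim_{t\uparrow\rho_\phi}\psi(t)\in(0,\infty]$; if $\rho_\phi=0$ put $\nu=0$. If $\nu\ge1$, $\tau\in(0,\rho_\phi]$ is the unique number with $\psi(\tau)=1$, otherwise $\tau=\rho_\phi$. Type I: $\nu\ge1$; type II: $0<\nu<1$; type III: $\nu=0$. Types of $(p_k)$: let $\rho_p$ be the radius of convergence of $p(z)$, $\mu_t=p'(t)$ for $t\in[0,\rho_p)$ and $\mu_{\rho_p}=\lim_{t\uparrow\rho_p}\mu_t$. Type I: $\rho_p>0$ and $\mu_{\rho_p}\ge1$, with $t_0$ the unique $t$ satisfying $\mu_t=1$; type II: $\rho_p>0$ and $0<\mu_{\rho_p}<1$, with $t_0=\rho_p$; type III: $\rho_p=0$, with $t_0=0$. *)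

theory Defs
  imports "HOL-Analysis.Analysis" "HOL-Computational_Algebra.Formal_Power_Series"
begin

definition ps_fun :: "(nat \<Rightarrow> real) \<Rightarrow> real \<Rightarrow> real" where
  "ps_fun a t = (\<Sum>k. a k * t ^ k)"

definition upto_filter :: "ereal \<Rightarrow> real filter" where
  "upto_filter \<rho> = (if \<rho> = \<infinity> then at_top else at_left (real_of_ereal \<rho>))"

definition wt_psi :: "(nat \<Rightarrow> real) \<Rightarrow> real \<Rightarrow> real" where
  "wt_psi w t = t * deriv (ps_fun w) t / ps_fun w t"

definition wt_nu :: "(nat \<Rightarrow> real) \<Rightarrow> ereal" where
  "wt_nu w = (if conv_radius w = 0 then 0
              else Lim (upto_filter (conv_radius w)) (\<lambda>t. ereal (wt_psi w t)))"

definition wt_typeI :: "(nat \<Rightarrow> real) \<Rightarrow> bool" where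
  "wt_typeI w \<longleftrightarrow> wt_nu w \<ge> 1"

definition wt_typeII :: "(nat \<Rightarrow> real) \<Rightarrow> bool" where
  "wt_typeII w \<longleftrightarrow> 0 < wt_nu w \<and> wt_nu w < 1"

definition wt_typeIII :: "(nat \<Rightarrow> real) \<Rightarrow> bool" where
  "wt_typeIII w \<longleftrightarrow> wt_nu w = 0"

text \<open>tau: if nu >= 1, the unique number in (0, rho] with psi = 1, where the value of psi
  at rho is its limit nu; i.e. the unique solution in (0, rho) if it exists, otherwise rho.
  If nu < 1, tau = rho.\<close>
definition wt_tau :: "(nat \<Rightarrow> real) \<Rightarrow> ereal" where
  "wt_tau w = (if wt_nu w \<ge> 1 \<and> (\<exists>!t. 0 < t \<and> ereal t < conv_radius w \<and> wt_psi w t = 1)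
               then ereal (THE t. 0 < t \<and> ereal t < conv_radius w \<and> wt_psi w t = 1)
               else conv_radius w)"

definition p_mu :: "(nat \<Rightarrow> real) \<Rightarrow> real \<Rightarrow> real" where
  "p_mu p t = deriv (ps_fun p) t"

definition p_mu_rho :: "(nat \<Rightarrow> real) \<Rightarrow> ereal" where
  "p_mu_rho p = Lim (upto_filter (conv_radius p)) (\<lambda>t. ereal (p_mu p t))"

definition p_typeI :: "(nat \<Rightarrow> real) \<Rightarrow> bool" where
  "p_typeI p \<longleftrightarrow> conv_radius p > 0 \<and> p_mu_rho p \<ge> 1"

definition p_typeII :: "(nat \<Rightarrow> real) \<Rightarrow> bool" where
  "p_typeII p \<longleftrightarrow> conv_radius p > 0 \<and> 0 < p_mu_rho p \<and> p_mu_rho p < 1"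

definition p_typeIII :: "(nat \<Rightarrow> real) \<Rightarrow> bool" where
  "p_typeIII p \<longleftrightarrow> conv_radius p = 0"

text \<open>t0: in type I the unique t in [0, rho] with mu_t = 1 (mu at rho being the limit),
  i.e. the unique solution in [0, rho) if it exists, else rho; in types II and III, t0 = rho
  (which is 0 in type III).\<close>
definition p_t0 :: "(nat \<Rightarrow> real) \<Rightarrow> ereal" where
  "p_t0 p = (if p_typeI p \<and> (\<exists>!t. 0 \<le> t \<and> ereal t < conv_radius p \<and> p_mu p t = 1)
             then ereal (THE t. 0 \<le> t \<and> ereal t < conv_radius p \<and> p_mu p t = 1)
             else conv_radius p)"

end

theory Submission
  imports Defs
begin


lemma ps_summable: "ereal \<bar>t\<bar> < conv_radius a \<Longrightarrow> summable (\<lambda>k. a k * (t::real)^k)"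
  using summable_in_conv_radius[of t a] by simp

lemma ps_mono:
  assumes "\<And>k. a k \<ge> 0" "0 \<le> s" "s \<le> t" "ereal t < conv_radius a"
  shows "ps_fun a s \<le> ps_fun a t"
  unfolding ps_fun_def
proof (rule suminf_le)
  show "summable (\<lambda>k. a k * t^k)" using assms by (intro ps_summable) simp
  show "summable (\<lambda>k. a k * s^k)" using assms
    by (intro ps_summable) (auto intro: le_less_trans[of "ereal s" "ereal t"])
  show "\<And>n. a n * s ^ n \<le> a n * t ^ n" using assms by (intro mult_left_mono power_mono) auto
qed

lemma ps_nonneg:
  assumes "\<And>k. a k \<ge> 0" "0 \<le> t" "ereal t < conv_radius a"
  shows "0 \<le> ps_fun a t"
  unfolding ps_fun_def using assms by (intro suminf_nonneg ps_summable) auto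

lemma ps_term_le:
  assumes "\<And>k. a k \<ge> 0" "0 \<le> t" "ereal t < conv_radius a"
  shows "a k * t^k \<le> ps_fun a t"
proof -
  have "sum (\<lambda>k. a k * t^k) {k} \<le> ps_fun a t" unfolding ps_fun_def
    using assms by (intro sum_le_suminf ps_summable) auto
  thus ?thesis by simp
qed

lemma ps_strict:
  assumes "\<And>k. a k \<ge> 0" "a k > 0" "k \<ge> 1" "0 \<le> s" "s < t" "ereal t < conv_radius a"
  shows "ps_fun a s < ps_fun a t"
proof -
  have st: "summable (\<lambda>k. a k * t^k)" "summable (\<lambda>k. a k * s^k)"
  proof -
    have "ereal s < conv_radius a" proof -
      have "ereal s < ereal t" using assms by simp
      thus ?thesis using assms(6) by (rule less_trans)
    qed
    thus "summable (\<lambda>k. a k * t^k)" "summable (\<lambda>k. a k * s^k)"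
      using assms by (auto intro!: ps_summable)
  qed
  have "0 < (\<Sum>n. a n * t^n - a n * s^n)"
  proof (rule suminf_pos2)
    show "summable (\<lambda>n. a n * t ^ n - a n * s ^ n)" using st by (rule summable_diff)
    show "\<And>n. 0 \<le> a n * t ^ n - a n * s ^ n" using assms
      by (simp add: mult_left_mono power_mono)
    have "s^k < t^k" using assms by (intro power_strict_mono) auto
    thus "0 < a k * t ^ k - a k * s ^ k" using assms by simp
  qed
  also have "\<dots> = ps_fun a t - ps_fun a s" unfolding ps_fun_def using st by (rule suminf_diff[symmetric])
  finally show ?thesis by simp
qed

lemma ps_deriv:
  assumes "ereal \<bar>t\<bar> < conv_radius a"
  shows "(ps_fun a has_real_derivative ps_fun (diffs a) t) (at t)"
proof -
  have "ps_fun a = (\<lambda>z. \<Sum>n. a n * z^n)" by (simp add: ps_fun_def fun_eq_iff)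
  thus ?thesis using has_field_derivative_powser[of t a UNIV] assms
    by (simp add: ps_fun_def)
qed

lemma conv_radius_diffs: "conv_radius (diffs (a::nat\<Rightarrow>real)) \<ge> conv_radius a"
proof -
  have "fps_nth (fps_deriv (Abs_fps a)) = diffs a"
    by (simp add: fun_eq_iff diffs_def fps_deriv_def)
  thus ?thesis using fps_conv_radius_deriv[of "Abs_fps a"] by (simp add: fps_conv_radius_def)
qed

lemma diffs_nonneg: "(\<And>k. a k \<ge> (0::real)) \<Longrightarrow> diffs a n \<ge> 0"
  by (simp add: diffs_def)

lemma ps_cont:
  assumes "ereal \<bar>t\<bar> < conv_radius a"
  shows "isCont (ps_fun a) t"
  using ps_deriv[OF assms] by (rule DERIV_isCont)

lemma mono_lim:
  fixes f :: "real \<Rightarrow> real" and R :: ereal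
  assumes R: "R > 0"
    and mono: "\<And>s t. 0 < s \<Longrightarrow> s \<le> t \<Longrightarrow> ereal t < R \<Longrightarrow> f s \<le> f t"
  shows "Lim (upto_filter R) (\<lambda>t. ereal (f t)) = (SUP t\<in>{t. 0 < t \<and> ereal t < R}. ereal (f t))"
    (is "_ = ?S")
proof (rule tendsto_Lim)
  show "\<not> trivial_limit (upto_filter R)"
    using R by (cases R) (auto simp: upto_filter_def trivial_limit_at_left_real)
  show "((\<lambda>t. ereal (f t)) \<longlongrightarrow> ?S) (upto_filter R)"
  proof (rule increasing_tendsto)
    have ev: "eventually (\<lambda>t. 0 < t \<and> ereal t < R) (upto_filter R)"
    proof (cases R)
      case (real r)
      with R have "r > 0" by simp
      thus ?thesis using real by (auto simp: upto_filter_def eventually_at_left intro!: exI[of _ 0])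
    next
      case PInf
      thus ?thesis by (auto simp: upto_filter_def eventually_at_top_dense)
    qed (use R in auto)
    show "eventually (\<lambda>t. ereal (f t) \<le> ?S) (upto_filter R)"
      using ev by eventually_elim (auto intro: SUP_upper)
    fix x assume "x < ?S"
    then obtain t0 where t0: "0 < t0" "ereal t0 < R" "x < ereal (f t0)"
      by (auto simp: less_SUP_iff)
    have "eventually (\<lambda>t. t0 \<le> t \<and> ereal t < R) (upto_filter R)"
    proof (cases R)
      case (real r)
      thus ?thesis using t0 by (auto simp: upto_filter_def eventually_at_left intro!: exI[of _ t0])
    next
      case PInf
      thus ?thesis by (auto simp: upto_filter_def eventually_at_top_linorder)
    qed (use R in auto)
    thus "eventually (\<lambda>t. x < ereal (f t)) (upto_filter R)"
    proof eventually_elim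
      case (elim t)
      hence "f t0 \<le> f t" using mono[of t0 t] t0 by auto
      thus ?case using t0 by (simp add: order_less_le_trans)
    qed
  qed
qed



definition Wc :: "(nat \<Rightarrow> real) \<Rightarrow> nat \<Rightarrow> real" where
  "Wc h = fps_nth (inverse (1 - Abs_fps h))"

lemma tri_le:
  fixes a b :: "nat \<Rightarrow> real"
  assumes "\<And>k. a k \<ge> 0" "\<And>k. b k \<ge> 0"
  shows "(\<Sum>k\<le>N. \<Sum>j\<le>k. a j * b (k - j)) \<le> (\<Sum>j\<le>N. a j) * (\<Sum>i\<le>N. b i)"
proof -
  have "(\<Sum>k\<le>N. \<Sum>j\<le>k. a j * b (k - j)) = (\<Sum>(i,j)\<in>{(i,j). i+j \<le> N}. a i * b j)"
    by (rule sum.triangle_reindex_eq[symmetric])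
  also have "\<dots> \<le> (\<Sum>(i,j)\<in>{..N}\<times>{..N}. a i * b j)"
    by (rule sum_mono2) (auto intro!: mult_nonneg_nonneg assms)
  also have "\<dots> = (\<Sum>j\<le>N. a j) * (\<Sum>i\<le>N. b i)"
    by (simp add: sum_product sum.cartesian_product)
  finally show ?thesis .
qed

context
  fixes h :: "nat \<Rightarrow> real"
  assumes h0: "h 0 = 0" and hnn: "\<And>k. h k \<ge> 0"
begin

lemma Wc_fps: "inverse (1 - Abs_fps h) * (1 - Abs_fps h) = 1"
  by (rule inverse_mult_eq_1) (simp add: h0)

lemma Wc_rec:
  shows "Wc h k = (if k = 0 then 1 else 0) + (\<Sum>i<k. Wc h i * h (k - i))"
proof -
  define W where "W = inverse (1 - Abs_fps h)"
  have "W * (1 - Abs_fps h) = 1" using Wc_fps by (simp add: W_def)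
  hence "W = 1 + W * Abs_fps h" by (simp add: algebra_simps)
  hence "fps_nth W k = fps_nth (1 + W * Abs_fps h) k" by simp
  also have "\<dots> = (if k = 0 then 1 else 0) + (\<Sum>i=0..k. fps_nth W i * h (k - i))"
    by (simp add: fps_mult_nth)
  also have "(\<Sum>i=0..k. fps_nth W i * h (k - i)) = (\<Sum>i<k. fps_nth W i * h (k - i))"
  proof -
    have "(\<Sum>i=0..k. fps_nth W i * h (k - i)) = (\<Sum>i<Suc k. fps_nth W i * h (k - i))"
      by (simp add: atLeast0AtMost lessThan_Suc_atMost)
    also have "\<dots> = (\<Sum>i<k. fps_nth W i * h (k - i))" using h0 by simp
    finally show ?thesis .
  qed
  finally show ?thesis by (simp add: Wc_def W_def)
qed

lemma Wc_0: "Wc h 0 = 1"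
  using Wc_rec[of 0] by simp

lemma Wc_nonneg:
  shows "Wc h k \<ge> 0"
proof (induction k rule: less_induct)
  case (less k)
  show ?case
    by (subst Wc_rec) (auto intro!: sum_nonneg mult_nonneg_nonneg less hnn)
qed

lemma Wc_ge:
  shows "h k \<le> Wc h k"
proof (cases "k = 0")
  case True thus ?thesis using hnn h0 Wc_0 by simp
next
  case False
  have "h k = Wc h 0 * h (k - 0)" using Wc_0 by simp
  also have "\<dots> \<le> (\<Sum>i<k. Wc h i * h (k - i))"
    using False by (intro member_le_sum mult_nonneg_nonneg Wc_nonneg hnn) auto
  also have "\<dots> = Wc h k" using Wc_rec[of k] False by simp
  finally show ?thesis .
qed

lemma Wc_radius_le:
  shows "conv_radius (Wc h) \<le> conv_radius h"
proof (rule conv_radius_geI_ex')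
  fix r :: real assume r: "0 < r" "ereal r < conv_radius (Wc h)"
  have "summable (\<lambda>k. Wc h k * r^k)" using r by (intro ps_summable) simp
  thus "summable (\<lambda>n. h n * of_real r ^ n)"
  proof (rule summable_comparison_test'[where N=0])
    fix n :: nat
    have "\<bar>h n * r ^ n\<bar> = h n * r^n" using r hnn[of n] by simp
    also have "\<dots> \<le> Wc h n * r ^ n" using r by (intro mult_right_mono Wc_ge) auto
    finally show "norm (h n * of_real r ^ n) \<le> Wc h n * r ^ n" by simp
  qed
qed

lemma Wc_eval:
  assumes "ereal \<bar>z\<bar> < conv_radius (Wc h)"
  shows "ps_fun (Wc h) z * (1 - ps_fun h z) = 1"
proof -
  define W where "W = inverse (1 - Abs_fps h)"
  have zR: "ereal \<bar>z\<bar> < conv_radius h" using assms Wc_radius_le by simp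
  have r1: "norm z < fps_conv_radius W" using assms by (simp add: fps_conv_radius_def W_def Wc_def)
  have r2: "norm z < fps_conv_radius (Abs_fps h)" using zR by (simp add: fps_conv_radius_def)
  have r3: "norm z < fps_conv_radius (1 - Abs_fps h)"
    using r2 fps_conv_radius_diff[of 1 "Abs_fps h"] by (simp add: order_less_le_trans)
  have "1 = eval_fps (W * (1 - Abs_fps h)) z" using Wc_fps by (simp add: W_def)
  also have "\<dots> = eval_fps W z * eval_fps (1 - Abs_fps h) z" using r1 r3 by (rule eval_fps_mult)
  also have "eval_fps (1 - Abs_fps h) z = 1 - eval_fps (Abs_fps h) z" using r2 by (simp add: eval_fps_diff)
  finally show ?thesis by (simp add: eval_fps_def ps_fun_def W_def Wc_def)
qed

lemma Wc_summable:
  assumes "0 \<le> t" "ereal t < conv_radius h" "ps_fun h t < 1"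
  shows "summable (\<lambda>k. Wc h k * t^k)"
proof (rule bounded_imp_summable)
  show "\<And>k. 0 \<le> Wc h k * t^k" using assms hnn by (auto intro!: mult_nonneg_nonneg Wc_nonneg)
  fix N
  define a where "a = (\<lambda>k. Wc h k * t^k)"
  define b where "b = (\<lambda>k. h k * t^k)"
  have a0: "\<And>k. a k \<ge> 0" "\<And>k. b k \<ge> 0" using assms hnn
    by (auto simp: a_def b_def intro!: mult_nonneg_nonneg Wc_nonneg)
  have ak: "a k = (if k = 0 then 1 else 0) + (\<Sum>j\<le>k. a j * b (k - j))" for k
  proof -
    have "a k = (if k = 0 then 1 else 0) + (\<Sum>j<k. Wc h j * h (k - j)) * t^k"
      unfolding a_def by (subst Wc_rec) (simp add: algebra_simps)
    also have "(\<Sum>j<k. Wc h j * h (k - j)) * t^k = (\<Sum>j\<le>k. Wc h j * h (k - j) * t^k)"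
      using h0 by (simp add: sum_distrib_right lessThan_Suc_atMost[symmetric])
    also have "\<dots> = (\<Sum>j\<le>k. a j * b (k - j))"
      by (intro sum.cong refl) (simp add: a_def b_def power_add[symmetric])
    finally show ?thesis .
  qed
  have "(\<Sum>k\<le>N. a k) = (\<Sum>k\<le>N. (if k = 0 then 1 else 0)) + (\<Sum>k\<le>N. \<Sum>j\<le>k. a j * b (k - j))"
    by (subst ak) (simp add: sum.distrib)
  also have "(\<Sum>k\<le>N. (if k = 0 then 1 else (0::real))) = 1" by simp
  also have "(\<Sum>k\<le>N. \<Sum>j\<le>k. a j * b (k - j)) \<le> (\<Sum>j\<le>N. a j) * (\<Sum>i\<le>N. b i)"
    by (rule tri_le) (use a0 in auto)
  also have "(\<Sum>i\<le>N. b i) \<le> ps_fun h t"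
    unfolding ps_fun_def b_def using assms hnn by (intro sum_le_suminf ps_summable) (auto intro!: mult_nonneg_nonneg)
  hence "(\<Sum>j\<le>N. a j) * (\<Sum>i\<le>N. b i) \<le> (\<Sum>j\<le>N. a j) * ps_fun h t"
    by (intro mult_left_mono sum_nonneg) (use a0 in auto)
  finally have "(\<Sum>k\<le>N. a k) * (1 - ps_fun h t) \<le> 1" by (simp add: algebra_simps)
  hence "(\<Sum>k\<le>N. a k) \<le> 1 / (1 - ps_fun h t)" using assms(3) by (simp add: field_simps)
  thus "(\<Sum>k\<le>N. Wc h k * t^k) \<le> 1 / (1 - ps_fun h t)" by (simp add: a_def)
qed

end



context
  fixes h :: "nat \<Rightarrow> real"
  assumes h0: "h 0 = 0" and hnn: "\<And>k. h k \<ge> 0" and hex: "\<exists>k. h k \<noteq> 0"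
begin

lemma hpos: obtains k0 where "k0 \<ge> 1" "h k0 > 0"
proof -
  obtain k where "h k \<noteq> 0" using hex by blast
  moreover have "k \<noteq> 0"
  proof
    assume "k = 0" thus False using h0 \<open>h k \<noteq> 0\<close> by simp
  qed
  ultimately show ?thesis using that[of k] hnn[of k] by auto
qed

lemma p_radius: "conv_radius (\<lambda>k. if k = 0 then 0 else h (k - 1)) = conv_radius h"
  using conv_radius_shift[of "\<lambda>k. if k = 0 then 0 else h (k - 1)" 1] by simp

lemma p_fun:
  assumes "ereal \<bar>t\<bar> < conv_radius h"
  shows "ps_fun (\<lambda>k. if k = 0 then 0 else h (k - 1)) t = t * ps_fun h t"
proof -
  have "(\<lambda>k. h k * t^k) sums ps_fun h t"
    unfolding ps_fun_def using assms by (intro summable_sums ps_summable)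
  hence "(\<lambda>k. t * (h k * t^k)) sums (t * ps_fun h t)" by (rule sums_mult)
  hence "(\<lambda>k. (\<lambda>k. (if k = 0 then 0 else h (k - 1)) * t^k) (Suc k)) sums (t * ps_fun h t)"
    by (simp add: algebra_simps)
  hence "(\<lambda>k. (if k = 0 then 0 else h (k - 1)) * t^k) sums (t * ps_fun h t + 0)"
    by (subst (asm) sums_Suc_iff) simp
  thus ?thesis by (simp add: ps_fun_def sums_iff)
qed

lemma H_deriv:
  assumes "ereal \<bar>t\<bar> < conv_radius h"
  shows "(ps_fun h has_real_derivative ps_fun (diffs h) t) (at t)"
  using ps_deriv[OF assms] .

lemma H'_radius: 
  assumes "ereal \<bar>t\<bar> < conv_radius h" shows "ereal \<bar>t\<bar> < conv_radius (diffs h)"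
  using assms conv_radius_diffs[of h] by (rule order.strict_trans2)

lemma p_deriv:
  assumes "ereal \<bar>t\<bar> < conv_radius h"
  shows "deriv (ps_fun (\<lambda>k. if k = 0 then 0 else h (k - 1))) t = ps_fun h t + t * ps_fun (diffs h) t"
proof -
  have "((\<lambda>z. z * ps_fun h z) has_real_derivative (1 * ps_fun h t + t * ps_fun (diffs h) t)) (at t)"
    using H_deriv[OF assms] by (auto intro!: derivative_eq_intros)
  hence d: "((\<lambda>z. z * ps_fun h z) has_real_derivative (ps_fun h t + t * ps_fun (diffs h) t)) (at t)"
    by simp
  have "(ps_fun (\<lambda>k. if k = 0 then 0 else h (k - 1)) has_real_derivative
          (ps_fun h t + t * ps_fun (diffs h) t)) (at t)"
  proof (rule has_field_derivative_transform_within_open[OF d])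
    show "open {z::real. ereal \<bar>z\<bar> < conv_radius h}"
      using open_eball[of "0::real" "conv_radius h"] by (simp add: eball_def dist_real_def)
    show "t \<in> {z. ereal \<bar>z\<bar> < conv_radius h}" using assms by simp
    show "\<And>x. x \<in> {z. ereal \<bar>z\<bar> < conv_radius h} \<Longrightarrow> x * ps_fun h x = ps_fun (\<lambda>k. if k = 0 then 0 else h (k - 1)) x"
      using p_fun by simp
  qed
  thus ?thesis by (rule DERIV_imp_deriv)
qed

lemma H_pos:
  assumes "0 < t" "ereal t < conv_radius h"
  shows "ps_fun h t > 0" "ps_fun (diffs h) t > 0"
proof -
  obtain k0 where k0: "k0 \<ge> 1" "h k0 > 0" by (rule hpos)
  have "0 < h k0 * t^k0" using k0 assms by simp
  also have "\<dots> \<le> ps_fun h t" using assms hnn by (intro ps_term_le) auto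
  finally show "ps_fun h t > 0" .
  have "diffs h (k0 - 1) = of_nat k0 * h k0" using k0 by (simp add: diffs_def)
  hence "0 < diffs h (k0 - 1) * t^(k0 - 1)" using k0 assms by simp
  also have "\<dots> \<le> ps_fun (diffs h) t"
    using assms H'_radius[of t] by (intro ps_term_le diffs_nonneg hnn) auto
  finally show "ps_fun (diffs h) t > 0" .
qed

lemma H_mono: "0 \<le> s \<Longrightarrow> s \<le> t \<Longrightarrow> ereal t < conv_radius h \<Longrightarrow> ps_fun h s \<le> ps_fun h t"
  by (rule ps_mono[OF hnn])

lemma H'_mono: "0 \<le> s \<Longrightarrow> s \<le> t \<Longrightarrow> ereal t < conv_radius h \<Longrightarrow> ps_fun (diffs h) s \<le> ps_fun (diffs h) t"
  using H'_radius[of t] by (intro ps_mono diffs_nonneg hnn) auto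

lemma H'_nonneg: "0 \<le> t \<Longrightarrow> ereal t < conv_radius h \<Longrightarrow> 0 \<le> ps_fun (diffs h) t"
  using H'_radius[of t] by (intro ps_nonneg diffs_nonneg hnn) auto

lemma H_nonneg: "0 \<le> t \<Longrightarrow> ereal t < conv_radius h \<Longrightarrow> 0 \<le> ps_fun h t"
  by (intro ps_nonneg hnn) auto

lemma H_strict: "0 \<le> s \<Longrightarrow> s < t \<Longrightarrow> ereal t < conv_radius h \<Longrightarrow> ps_fun h s < ps_fun h t"
proof -
  assume a: "0 \<le> s" "s < t" "ereal t < conv_radius h"
  obtain k0 where k0: "k0 \<ge> 1" "h k0 > 0" by (rule hpos)
  show ?thesis using a k0 by (intro ps_strict[OF hnn]) auto
qed

lemma H_0: "ps_fun h 0 = 0"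
  unfolding ps_fun_def using h0 by (simp add: zero_power)

lemma H_cont: "ereal \<bar>t\<bar> < conv_radius h \<Longrightarrow> isCont (ps_fun h) t"
  by (rule ps_cont)

lemma H'_cont: "ereal \<bar>t\<bar> < conv_radius h \<Longrightarrow> isCont (ps_fun (diffs h)) t"
  by (rule ps_cont, rule H'_radius)

lemma W_prop:
  assumes "ereal \<bar>z\<bar> < conv_radius (Wc h)"
  shows "ps_fun h z \<noteq> 1" "ps_fun (Wc h) z = 1 / (1 - ps_fun h z)"
proof -
  have e: "ps_fun (Wc h) z * (1 - ps_fun h z) = 1" using Wc_eval[of h, OF h0 hnn assms] .
  thus "ps_fun h z \<noteq> 1" by auto
  thus "ps_fun (Wc h) z = 1 / (1 - ps_fun h z)" using e by (simp add: field_simps)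
qed

lemma W_lt1:
  assumes "0 \<le> t" "ereal t < conv_radius (Wc h)"
  shows "ps_fun h t < 1"
proof -
  have e: "ps_fun (Wc h) t * (1 - ps_fun h t) = 1" using Wc_eval[of h, OF h0 hnn] assms by simp
  have "0 \<le> ps_fun (Wc h) t" using assms by (intro ps_nonneg Wc_nonneg[of h, OF h0 hnn]) auto
  with e show ?thesis by (smt (verit) mult_nonneg_nonpos)
qed

lemma W_psi:
  assumes "0 < t" "ereal t < conv_radius (Wc h)"
  shows "wt_psi (Wc h) t = t * ps_fun (diffs h) t / (1 - ps_fun h t)"
proof -
  have tR: "ereal \<bar>t\<bar> < conv_radius h" using assms Wc_radius_le[of h, OF h0 hnn] by simp
  have H1: "ps_fun h t \<noteq> 1" using W_prop(1)[of t] assms by simp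
  have d: "((\<lambda>z. 1 / (1 - ps_fun h z)) has_real_derivative
            (ps_fun (diffs h) t / (1 - ps_fun h t)^2)) (at t)"
    using H_deriv[OF tR] H1
    by (auto intro!: derivative_eq_intros simp: power2_eq_square field_simps)
  have "(ps_fun (Wc h) has_real_derivative (ps_fun (diffs h) t / (1 - ps_fun h t)^2)) (at t)"
  proof (rule has_field_derivative_transform_within_open[OF d])
    show "open {z::real. ereal \<bar>z\<bar> < conv_radius (Wc h)}"
      using open_eball[of "0::real" "conv_radius (Wc h)"] by (simp add: eball_def dist_real_def)
    show "t \<in> {z. ereal \<bar>z\<bar> < conv_radius (Wc h)}" using assms by simp
    show "\<And>x. x \<in> {z. ereal \<bar>z\<bar> < conv_radius (Wc h)} \<Longrightarrow> 1 / (1 - ps_fun h x) = ps_fun (Wc h) x"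
      using W_prop(2) by simp
  qed
  hence D: "deriv (ps_fun (Wc h)) t = ps_fun (diffs h) t / (1 - ps_fun h t)^2" by (rule DERIV_imp_deriv)
  have W: "ps_fun (Wc h) t = 1 / (1 - ps_fun h t)" using W_prop(2)[of t] assms by simp
  have H2: "1 - ps_fun h t \<noteq> 0" using H1 by simp
  have alg: "\<And>d y::real. d \<noteq> 0 \<Longrightarrow> t * (y / d^2) / (1 / d) = t * y / d"
    by (simp add: power2_eq_square field_simps)
  show ?thesis unfolding wt_psi_def D W using alg[OF H2] .
qed

end



lemma ereal_lt_trans': "(a::real) \<le> b \<Longrightarrow> ereal b < R \<Longrightarrow> ereal a < R"
proof -
  assume "a \<le> b" "ereal b < R"
  moreover have "ereal a \<le> ereal b" using \<open>a \<le> b\<close> by simp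
  ultimately show ?thesis using order.strict_trans1[of "ereal a" "ereal b" R] by blast
qed

context
  fixes h :: "nat \<Rightarrow> real"
  assumes h0: "h 0 = 0" and hnn: "\<And>k. h k \<ge> 0" and hex: "\<exists>k. h k \<noteq> 0"
begin

abbreviation "HH \<equiv> ps_fun h"
abbreviation "DH \<equiv> ps_fun (diffs h)"

lemmas Hpos = H_pos[OF h0 hnn hex]
lemmas Hmono = H_mono[OF h0 hnn hex]
lemmas H'mono = H'_mono[OF h0 hnn hex]
lemmas H'nonneg = H'_nonneg[OF h0 hnn hex]
lemmas Hnonneg = H_nonneg[OF h0 hnn hex]
lemmas Hstrict = H_strict[OF h0 hnn hex]
lemmas H0 = H_0[OF h0 hnn hex]
lemmas Hcont = H_cont[OF h0 hnn hex]
lemmas H'cont = H'_cont[OF h0 hnn hex]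
lemmas Wlt1 = W_lt1[OF h0 hnn hex]
lemmas Wpsi = W_psi[OF h0 hnn hex]
lemmas pderiv = p_deriv[OF h0 hnn hex]
lemmas pradius = p_radius[OF h0 hnn hex]
lemmas WR = Wc_radius_le[of h, OF h0 hnn]
lemmas Wsum = Wc_summable[of h, OF h0 hnn]

lemma hit_case:
  assumes "0 \<le> t1" "ereal t1 < conv_radius h" "HH t1 \<ge> 1"
  shows "\<exists>ts. 0 < ts \<and> ereal ts < conv_radius h \<and> HH ts = 1 \<and> conv_radius (Wc h) = ereal ts"
proof -
  have "continuous_on {0..t1} HH"
  proof (intro continuous_at_imp_continuous_on ballI Hcont)
    fix x assume "x \<in> {0..t1}"
    hence "ereal \<bar>x\<bar> \<le> ereal t1" by simp
    thus "ereal \<bar>x\<bar> < conv_radius h" using assms(2) by (rule order.strict_trans1)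
  qed
  then obtain ts where ts: "0 \<le> ts" "ts \<le> t1" "HH ts = 1"
    using IVT'[of HH 0 1 t1] assms H0 by auto
  have "ereal ts \<le> ereal t1" using ts(2) by simp
  hence tsR: "ereal ts < conv_radius h" using assms(2) by (rule order.strict_trans1)
  have "ts \<noteq> 0" using ts H0 by auto
  hence ts0: "ts > 0" using ts by simp
  have "conv_radius (Wc h) \<ge> ereal ts"
  proof (rule conv_radius_geI_ex')
    fix r :: real assume r: "0 < r" "ereal r < ereal ts"
    have "HH r < HH ts" using r ts tsR by (intro Hstrict) auto
    hence "summable (\<lambda>k. Wc h k * r^k)" using r ts tsR
      by (intro Wsum) (auto intro: ereal_lt_trans'[of r ts])
    thus "summable (\<lambda>n. Wc h n * of_real r ^ n)" by simp
  qed
  moreover have "\<not> ereal ts < conv_radius (Wc h)"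
    using Wlt1[of ts] ts by auto
  ultimately have "conv_radius (Wc h) = ereal ts" by simp
  thus ?thesis using ts0 tsR ts by blast
qed

lemma nohit_case:
  assumes "\<And>t. 0 \<le> t \<Longrightarrow> ereal t < conv_radius h \<Longrightarrow> HH t < 1"
  shows "conv_radius (Wc h) = conv_radius h" "conv_radius h \<noteq> \<infinity>"
proof -
  show "conv_radius (Wc h) = conv_radius h"
  proof (rule antisym[OF WR conv_radius_geI_ex'])
    fix r :: real assume r: "0 < r" "ereal r < conv_radius h"
    thus "summable (\<lambda>n. Wc h n * of_real r ^ n)" using assms[of r] Wsum[of r] by simp
  qed
  show "conv_radius h \<noteq> \<infinity>"
  proof
    assume inf: "conv_radius h = \<infinity>"
    obtain k0 where k0: "k0 \<ge> 1" "h k0 > 0" by (rule hpos[OF h0 hnn hex])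
    define t where "t = max 1 (1 / h k0)"
    have t1: "t \<ge> 1" "t \<ge> 1 / h k0" by (auto simp: t_def)
    have "1 \<le> h k0 * t" using t1 k0 by (simp add: field_simps)
    also have "\<dots> \<le> h k0 * t^k0"
    proof -
      have "t^1 \<le> t^k0" using t1 k0 by (intro power_increasing) auto
      thus ?thesis using k0 by simp
    qed
    also have "\<dots> \<le> HH t" using inf t1 by (intro ps_term_le hnn) auto
    finally show False using assms[of t] inf t1 by simp
  qed
qed

lemma main_aux:
  assumes p: "p = (\<lambda>k. if k = 0 then 0 else h (k - 1))"
  shows "(wt_typeI (Wc h) \<longleftrightarrow> p_typeI p) \<and> (wt_typeII (Wc h) \<longleftrightarrow> p_typeII p)
       \<and> (wt_typeIII (Wc h) \<longleftrightarrow> p_typeIII p) \<and> wt_tau (Wc h) = p_t0 p"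
proof -
  define w where "w = Wc h"
  define R where "R = conv_radius h"
  define \<rho> where "\<rho> = conv_radius w"
  define G where "G = (\<lambda>t. HH t + t * DH t)"
  define \<psi> where "\<psi> = (\<lambda>t. t * DH t / (1 - HH t))"
  have pR: "conv_radius p = R" using pradius p by (simp add: R_def)
  have \<rho>R: "\<rho> \<le> R" using WR by (simp add: \<rho>_def R_def w_def)
  have pmu: "p_mu p t = G t" if "0 \<le> t" "ereal t < R" for t
    unfolding p_mu_def p G_def using pderiv[of t] that by (simp add: R_def)
  have psi: "wt_psi w t = \<psi> t" if "0 < t" "ereal t < \<rho>" for t
    using Wpsi[of t] that unfolding \<psi>_def w_def \<rho>_def by simp
  have "(wt_typeI w \<longleftrightarrow> p_typeI p) \<and> (wt_typeII w \<longleftrightarrow> p_typeII p)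
       \<and> (wt_typeIII w \<longleftrightarrow> p_typeIII p) \<and> wt_tau w = p_t0 p"
  proof (cases "R = 0")
    case True
    have \<rho>0: "\<rho> = 0" using \<rho>R True conv_radius_nonneg[of w] unfolding \<rho>_def by simp
    have nu0: "wt_nu w = 0" using \<rho>0 by (simp add: wt_nu_def \<rho>_def)
    have nI: "\<not> p_typeI p" using pR True by (simp add: p_typeI_def)
    show ?thesis using nu0 nI pR True \<rho>0
      by (simp add: wt_typeI_def wt_typeII_def wt_typeIII_def p_typeII_def p_typeIII_def
          wt_tau_def p_t0_def \<rho>_def)
  next
    case False
    hence R0: "R > 0" using conv_radius_nonneg[of h] by (simp add: R_def)
    define hit where "hit = (\<exists>t. 0 \<le> t \<and> ereal t < R \<and> HH t \<ge> 1)"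
    obtain r0 where r0: "\<rho> = ereal r0" "0 < r0"
      and hitc: "hit \<Longrightarrow> HH r0 = 1 \<and> ereal r0 < R" and nohitc: "\<not> hit \<Longrightarrow> \<rho> = R"
    proof (cases hit)
      case True
      then obtain t1 where "0 \<le> t1" "ereal t1 < R" "HH t1 \<ge> 1" by (auto simp: hit_def)
      from hit_case[OF this[unfolded R_def]] obtain ts where
        "0 < ts" "ereal ts < R" "HH ts = 1" "\<rho> = ereal ts"
        by (auto simp: R_def \<rho>_def w_def)
      thus ?thesis using that[of ts] True by auto
    next
      case False
      have hl: "\<And>t. 0 \<le> t \<Longrightarrow> ereal t < conv_radius h \<Longrightarrow> HH t < 1"
        using False by (auto simp: hit_def R_def not_le)
      have "\<rho> = R" "R \<noteq> \<infinity>" using nohit_case[OF hl]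
        by (auto simp: R_def \<rho>_def w_def)
      with R0 obtain r where "R = ereal r" "r > 0" by (cases R) auto
      thus ?thesis using that[of r] False \<open>\<rho> = R\<close> by auto
    qed
    have r0R: "ereal r0 \<le> R" using \<rho>R r0 by simp
    have inR: "ereal t < R" if "t < r0" for t
      using order.strict_trans2[of "ereal t" "ereal r0" R] that r0R by simp
    have Hlt: "HH t < 1" if "0 \<le> t" "t < r0" for t
      using Wlt1[of t] that r0 by (simp add: \<rho>_def w_def)
    have DHnn: "0 \<le> DH t" if "0 \<le> t" "ereal t < R" for t
      using H'nonneg[of t] that by (simp add: R_def)
    have HHnn: "0 \<le> HH t" if "0 \<le> t" "ereal t < R" for t
      using Hnonneg[of t] that by (simp add: R_def)
    have Gmono: "G s \<le> G t" if "0 \<le> s" "s \<le> t" "ereal t < R" for s t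
    proof -
      have sR: "ereal s < R" using ereal_lt_trans'[OF that(2,3)] .
      have "HH s \<le> HH t" using Hmono[of s t] that by (simp add: R_def)
      moreover have "s * DH s \<le> t * DH t"
        using that H'mono[of s t] DHnn[of s] sR by (intro mult_mono) (auto simp: R_def)
      ultimately show ?thesis unfolding G_def by simp
    qed
    have Gstrict: "G s < G t" if "0 \<le> s" "s < t" "ereal t < R" for s t
    proof -
      have sR: "ereal s < R" using ereal_lt_trans'[of s t] that by simp
      have "HH s < HH t" using Hstrict[of s t] that by (simp add: R_def)
      moreover have "s * DH s \<le> t * DH t"
        using that H'mono[of s t] DHnn[of s] sR by (intro mult_mono) (auto simp: R_def)
      ultimately show ?thesis unfolding G_def by simp
    qed
    have psimono: "\<psi> s \<le> \<psi> t" if "0 < s" "s \<le> t" "t < r0" for s t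
    proof -
      have tR: "ereal t < R" using inR that by simp
      have sR: "ereal s < R" using inR that by simp
      have "s * DH s \<le> t * DH t"
        using that H'mono[of s t] DHnn[of s] sR tR by (intro mult_mono) (auto simp: R_def)
      moreover have "0 \<le> s * DH s" using that DHnn[of s] sR by simp
      moreover have "0 < 1 - HH t" using Hlt[of t] that by simp
      moreover have "1 - HH t \<le> 1 - HH s" using Hmono[of s t] that tR by (simp add: R_def)
      ultimately show ?thesis unfolding \<psi>_def
        by (intro frac_le) auto
    qed
    have nu: "wt_nu w = (SUP t\<in>{t. 0 < t \<and> ereal t < \<rho>}. ereal (\<psi> t))"
    proof -
      have "\<rho> \<noteq> 0" using r0 by simp
      hence "wt_nu w = Lim (upto_filter \<rho>) (\<lambda>t. ereal (wt_psi w t))"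
        by (simp add: wt_nu_def \<rho>_def)
      also have "\<dots> = (SUP t\<in>{t. 0 < t \<and> ereal t < \<rho>}. ereal (wt_psi w t))"
      proof (rule mono_lim)
        show "0 < \<rho>" using r0 by simp
        fix s t assume "0 < s" "s \<le> t" "ereal t < \<rho>"
        thus "wt_psi w s \<le> wt_psi w t" using psi[of s] psi[of t] psimono[of s t] r0
          by (simp add: ereal_lt_trans')
      qed
      also have "\<dots> = (SUP t\<in>{t. 0 < t \<and> ereal t < \<rho>}. ereal (\<psi> t))"
        by (intro SUP_cong refl) (simp add: psi)
      finally show ?thesis .
    qed
    have mu: "p_mu_rho p = (SUP t\<in>{t. 0 < t \<and> ereal t < R}. ereal (G t))"
    proof -
      have "p_mu_rho p = Lim (upto_filter R) (\<lambda>t. ereal (p_mu p t))"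
        by (simp add: p_mu_rho_def pR)
      also have "\<dots> = (SUP t\<in>{t. 0 < t \<and> ereal t < R}. ereal (p_mu p t))"
      proof (rule mono_lim)
        show "0 < R" using R0 .
        fix s t assume "0 < s" "s \<le> t" "ereal t < R"
        thus "p_mu p s \<le> p_mu p t" using pmu[of s] pmu[of t] Gmono[of s t]
          by (simp add: ereal_lt_trans')
      qed
      also have "\<dots> = (SUP t\<in>{t. 0 < t \<and> ereal t < R}. ereal (G t))"
        by (intro SUP_cong refl) (simp add: pmu)
      finally show ?thesis .
    qed
    define t0 where "t0 = r0 / 2"
    have t0: "0 < t0" "t0 < r0" "ereal t0 < R" "ereal t0 < \<rho>" using r0 inR by (auto simp: t0_def)
    have DHpos: "0 < DH t" if "0 < t" "ereal t < R" for t using Hpos(2)[of t] that by (simp add: R_def)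
    have HHpos: "0 < HH t" if "0 < t" "ereal t < R" for t using Hpos(1)[of t] that by (simp add: R_def)
    have nupos: "0 < wt_nu w"
    proof -
      have "0 < \<psi> t0" unfolding \<psi>_def using t0 DHpos[of t0] Hlt[of t0] by simp
      hence "ereal 0 < ereal (\<psi> t0)" by simp
      also have "\<dots> \<le> wt_nu w" unfolding nu using t0 by (intro SUP_upper) auto
      finally show ?thesis by (simp add: zero_ereal_def)
    qed
    have mupos: "0 < p_mu_rho p"
    proof -
      have "0 < G t0" unfolding G_def using t0 DHpos[of t0] HHpos[of t0] by (simp add: add_pos_pos)
      hence "ereal 0 < ereal (G t0)" by simp
      also have "\<dots> \<le> p_mu_rho p" unfolding mu using t0 by (intro SUP_upper) auto
      finally show ?thesis by (simp add: zero_ereal_def)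
    qed
    have psi_le: "\<psi> t \<le> n" if "0 < t" "t < r0" "wt_nu w \<le> ereal n" for t n
    proof -
      have "ereal (\<psi> t) \<le> wt_nu w" unfolding nu using that r0 by (intro SUP_upper) auto
      hence "ereal (\<psi> t) \<le> ereal n" using that(3) by (rule order.trans)
      thus ?thesis by simp
    qed
    have G_le: "G t \<le> m" if "0 < t" "ereal t < R" "p_mu_rho p \<le> ereal m" for t m
    proof -
      have "ereal (G t) \<le> p_mu_rho p" unfolding mu using that by (intro SUP_upper) auto
      hence "ereal (G t) \<le> ereal m" using that(3) by (rule order.trans)
      thus ?thesis by simp
    qed
    have fwd: "p_mu_rho p < 1" if a: "wt_nu w < 1"
    proof -
      obtain n where n: "wt_nu w = ereal n" using nupos a by (cases "wt_nu w") auto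
      have n01: "0 < n" "n < 1" using nupos a n by auto
      define \<delta> where "\<delta> = t0 * DH t0 / n"
      have \<delta>pos: "\<delta> > 0" unfolding \<delta>_def using t0 DHpos[of t0] n01 by simp
      have gap: "\<delta> \<le> 1 - HH t" if "t0 \<le> t" "t < r0" for t
      proof -
        have tR: "ereal t < R" using inR that by simp
        have "t0 * DH t0 \<le> t * DH t"
          using that t0 H'mono[of t0 t] DHnn[of t0] tR by (intro mult_mono) (auto simp: R_def)
        also have "t * DH t \<le> n * (1 - HH t)"
        proof -
          have "\<psi> t \<le> n" using psi_le[of t n] that t0 n by simp
          moreover have "0 < 1 - HH t" using Hlt[of t] that t0 by simp
          ultimately show ?thesis unfolding \<psi>_def by (simp add: pos_divide_le_eq mult.commute)
        qed
        finally show ?thesis unfolding \<delta>_def using n01 by (simp add: divide_le_eq mult.commute)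
      qed
      show ?thesis
      proof (cases hit)
        case True
        hence Hr0: "HH r0 = 1" "ereal r0 < R" using hitc by auto
        have "continuous_on {t0..r0} HH"
        proof (intro continuous_at_imp_continuous_on ballI Hcont)
          fix x assume "x \<in> {t0..r0}"
          hence "ereal \<bar>x\<bar> \<le> ereal r0" using t0 by simp
          thus "ereal \<bar>x\<bar> < conv_radius h" using Hr0(2) unfolding R_def by (rule order.strict_trans1)
        qed
        moreover have "HH t0 \<le> 1 - \<delta> / 2" using gap[of t0] t0 \<delta>pos by simp
        moreover have "1 - \<delta> / 2 \<le> HH r0" using Hr0 \<delta>pos by simp
        ultimately obtain t where t: "t0 \<le> t" "t \<le> r0" "HH t = 1 - \<delta> / 2"
          using IVT'[of HH t0 "1 - \<delta> / 2" r0] t0 by auto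
        have "t \<noteq> r0" using t Hr0 \<delta>pos by auto
        hence "t < r0" using t by simp
        hence "\<delta> \<le> \<delta> / 2" using gap[of t] t by simp
        thus ?thesis using \<delta>pos by simp
      next
        case False
        hence RR: "R = ereal r0" using nohitc r0 by simp
        have aux: "G t \<le> 1 - (1 - n) * \<delta>" if "t0 \<le> t" "t < r0" for t
        proof -
          have tR: "ereal t < R" using inR that by simp
          have "t * DH t \<le> n * (1 - HH t)"
          proof -
            have "\<psi> t \<le> n" using psi_le[of t n] that t0 n by simp
            moreover have "0 < 1 - HH t" using Hlt[of t] that t0 by simp
            ultimately show ?thesis unfolding \<psi>_def by (simp add: pos_divide_le_eq mult.commute)
          qed
          hence "G t \<le> 1 - (1 - n) * (1 - HH t)" unfolding G_def by (simp add: algebra_simps)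
          also have "(1 - n) * \<delta> \<le> (1 - n) * (1 - HH t)"
            using gap[OF that] n01 by (intro mult_left_mono) auto
          hence "1 - (1 - n) * (1 - HH t) \<le> 1 - (1 - n) * \<delta>" by simp
          finally show ?thesis .
        qed
        have "p_mu_rho p \<le> ereal (1 - (1 - n) * \<delta>)" unfolding mu
        proof (rule SUP_least)
          fix t assume "t \<in> {t. 0 < t \<and> ereal t < R}"
          hence t: "0 < t" "t < r0" using RR by auto
          show "ereal (G t) \<le> ereal (1 - (1 - n) * \<delta>)"
          proof (cases "t0 \<le> t")
            case True thus ?thesis using aux t by simp
          next
            case False
            hence "G t \<le> G t0" using Gmono[of t t0] t t0 by simp
            thus ?thesis using aux[of t0] t0 by simp
          qed
        qed
        also have "\<dots> < 1" using n01 \<delta>pos by simp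
        finally show ?thesis .
      qed
    qed
    have bwd: "wt_nu w < 1" if a: "p_mu_rho p < 1"
    proof -
      obtain m where m: "p_mu_rho p = ereal m" using mupos a by (cases "p_mu_rho p") auto
      have m01: "0 < m" "m < 1" using mupos a m by auto
      show ?thesis
      proof (cases hit)
        case True
        hence Hr0: "HH r0 = 1" "ereal r0 < R" using hitc by auto
        have "G r0 \<le> m" using G_le[of r0 m] Hr0 r0 m by simp
        moreover have "0 \<le> r0 * DH r0" using DHnn[of r0] Hr0 r0 by simp
        ultimately show ?thesis using Hr0 m01 unfolding G_def by simp
      next
        case False
        hence RR: "R = ereal r0" using nohitc r0 by simp
        have "wt_nu w \<le> ereal m" unfolding nu
        proof (rule SUP_least)
          fix t assume "t \<in> {t. 0 < t \<and> ereal t < \<rho>}"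
          hence t: "0 < t" "t < r0" using r0 by auto
          have tR: "ereal t < R" using RR t by simp
          have "G t \<le> m" using G_le[of t m] t tR m by simp
          moreover have "m * HH t \<le> HH t" using m01 HHnn[of t] t tR
            by (simp add: mult_left_le_one_le)
          ultimately have "t * DH t \<le> m * (1 - HH t)" unfolding G_def by (simp add: algebra_simps)
          moreover have "0 < 1 - HH t" using Hlt[of t] t by simp
          ultimately have "\<psi> t \<le> m" unfolding \<psi>_def by (simp add: pos_divide_le_eq mult.commute)
          thus "ereal (\<psi> t) \<le> ereal m" by simp
        qed
        also have "\<dots> < 1" using m01 by simp
        finally show ?thesis .
      qed
    qed
    have equiv: "wt_nu w < 1 \<longleftrightarrow> p_mu_rho p < 1" using fwd bwd by blast
    have tI: "wt_typeI w \<longleftrightarrow> p_typeI p"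
      unfolding wt_typeI_def p_typeI_def using equiv pR R0 by (auto simp: not_less[symmetric])
    have tII: "wt_typeII w \<longleftrightarrow> p_typeII p"
      unfolding wt_typeII_def p_typeII_def using equiv pR R0 nupos mupos by auto
    have tIII: "wt_typeIII w \<longleftrightarrow> p_typeIII p"
      unfolding wt_typeIII_def p_typeIII_def using pR R0 nupos by auto
    have G0: "G 0 = 0" unfolding G_def using H0 by simp
    have Q12: "(0 < t \<and> ereal t < \<rho> \<and> wt_psi w t = 1) \<longleftrightarrow> (0 \<le> t \<and> ereal t < R \<and> p_mu p t = 1)" for t
    proof
      assume a: "0 < t \<and> ereal t < \<rho> \<and> wt_psi w t = 1"
      hence t: "0 < t" "t < r0" "ereal t < R" using r0 inR by auto
      have "\<psi> t = 1" using a psi[of t] by simp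
      moreover have "0 < 1 - HH t" using Hlt[of t] t by simp
      ultimately have "t * DH t = 1 - HH t" unfolding \<psi>_def by (simp add: field_simps)
      hence "G t = 1" unfolding G_def by simp
      thus "0 \<le> t \<and> ereal t < R \<and> p_mu p t = 1" using pmu[of t] t by simp
    next
      assume a: "0 \<le> t \<and> ereal t < R \<and> p_mu p t = 1"
      hence G1: "G t = 1" using pmu[of t] by simp
      have "t \<noteq> 0" using G1 G0 by auto
      hence t: "0 < t" "ereal t < R" using a by auto
      have "0 < t * DH t" using DHpos[of t] t by simp
      hence H1: "HH t < 1" using G1 unfolding G_def by simp
      have "ereal t < \<rho>"
      proof (cases hit)
        case True
        hence Hr0: "HH r0 = 1" "ereal r0 < R" using hitc by auto
        have "t < r0"
        proof (rule ccontr)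
          assume "\<not> t < r0"
          hence "HH r0 \<le> HH t" using Hmono[of r0 t] t r0 by (simp add: R_def)
          thus False using H1 Hr0 by simp
        qed
        thus ?thesis using r0 by simp
      next
        case False thus ?thesis using nohitc t by simp
      qed
      moreover have "\<psi> t = 1" unfolding \<psi>_def using G1 H1 unfolding G_def by (simp add: field_simps)
      ultimately show "0 < t \<and> ereal t < \<rho> \<and> wt_psi w t = 1" using psi[of t] t by simp
    qed
    have uniq: "s = t" if "0 \<le> s \<and> ereal s < R \<and> p_mu p s = 1" "0 \<le> t \<and> ereal t < R \<and> p_mu p t = 1" for s t
    proof -
      have "G s = 1" "G t = 1" using that pmu by auto
      thus ?thesis using that Gstrict[of s t] Gstrict[of t s] by (cases s t rule: linorder_cases) auto
    qed
    have tau: "wt_tau w = p_t0 p"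
    proof (cases "\<exists>t. 0 \<le> t \<and> ereal t < R \<and> p_mu p t = 1")
      case True
      then obtain t where t: "0 \<le> t \<and> ereal t < R \<and> p_mu p t = 1" by blast
      have ex2: "\<exists>!t. 0 \<le> t \<and> ereal t < R \<and> p_mu p t = 1" using t uniq by blast
      have ex1: "\<exists>!t. 0 < t \<and> ereal t < \<rho> \<and> wt_psi w t = 1" using ex2 Q12 by simp
      have t1: "0 < t \<and> ereal t < \<rho> \<and> wt_psi w t = 1" using t Q12 by blast
      have "ereal (\<psi> t) \<le> wt_nu w" unfolding nu using t1 by (intro SUP_upper) auto
      moreover have "\<psi> t = 1" using t1 psi[of t] by simp
      ultimately have nu1: "1 \<le> wt_nu w" by (simp add: one_ereal_def)
      hence pI: "p_typeI p" using tI by (simp add: wt_typeI_def)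
      have "wt_tau w = ereal (THE t. 0 < t \<and> ereal t < \<rho> \<and> wt_psi w t = 1)"
        unfolding wt_tau_def using nu1 ex1 by (simp add: \<rho>_def)
      also have "\<dots> = ereal (THE t. 0 \<le> t \<and> ereal t < R \<and> p_mu p t = 1)" using Q12 by simp
      also have "\<dots> = p_t0 p" unfolding p_t0_def using pI ex2 pR by simp
      finally show ?thesis .
    next
      case False
      have "\<not> hit"
      proof
        assume hit
        hence Hr0: "HH r0 = 1" "ereal r0 < R" using hitc by auto
        have "continuous_on {0..r0} G"
        proof (intro continuous_at_imp_continuous_on ballI)
          fix x assume "x \<in> {0..r0}"
          hence "ereal \<bar>x\<bar> \<le> ereal r0" by simp
          hence xR: "ereal \<bar>x\<bar> < conv_radius h" using Hr0(2) unfolding R_def by (rule order.strict_trans1)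
          show "isCont G x" unfolding G_def
            using Hcont[OF xR] H'cont[OF xR] by (intro continuous_intros) auto
        qed
        moreover have "1 \<le> G r0" using Hr0 DHnn[of r0] r0 unfolding G_def by simp
        ultimately obtain t where "0 \<le> t" "t \<le> r0" "G t = 1"
          using IVT'[of G 0 1 r0] G0 r0 by auto
        moreover have "ereal t < R" using ereal_lt_trans'[OF \<open>t \<le> r0\<close> Hr0(2)] .
        ultimately show False using False pmu[of t] by auto
      qed
      hence "\<rho> = R" using nohitc by simp
      have n1: "\<not> (\<exists>!t. 0 < t \<and> ereal t < \<rho> \<and> wt_psi w t = 1)" using False Q12 by blast
      have n2: "\<not> (\<exists>!t. 0 \<le> t \<and> ereal t < conv_radius p \<and> p_mu p t = 1)" using False pR by auto
      show ?thesis unfolding wt_tau_def p_t0_def using n1 n2 \<open>\<rho> = R\<close> pR by (simp add: \<rho>_def)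
    qed
    show ?thesis using tI tII tIII tau by blast
  qed
  thus ?thesis by (simp add: w_def)
qed

end


theorem mainTheorem7:
  fixes h :: "nat \<Rightarrow> real"
  assumes "h 0 = 0"
    and "\<And>k. h k \<ge> 0"
    and "\<exists>k. h k \<noteq> 0"
  defines "w \<equiv> fps_nth (inverse (1 - Abs_fps h))"
    and "p \<equiv> (\<lambda>k. if k = 0 then 0 else h (k - 1))"
  shows "(wt_typeI w \<longleftrightarrow> p_typeI p) \<and> (wt_typeII w \<longleftrightarrow> p_typeII p)
       \<and> (wt_typeIII w \<longleftrightarrow> p_typeIII p) \<and> wt_tau w = p_t0 p"
proof -
  have wW: "w = Wc h" unfolding w_def Wc_def ..
  have pp: "p = (\<lambda>k. if k = 0 then 0 else h (k - 1))" unfolding p_def ..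
  show ?thesis unfolding wW using main_aux[of h p, OF assms(1) assms(2) assms(3) pp] .
qed

end
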